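(* Let $d=\infty$, $C>0$, and let ${\boldsymbol\gamma}$ be product weights with $\sum_{j\in\mathbb N}\gamma_j<\infty$, and let $p=\mathrm{decay}((\gamma_j)_{j\in\mathbb N})$. Then $$\mathrm{decay}(T^\uparrow_{\infty,C}{\boldsymbol\gamma})=\mathrm{decay}({\boldsymbol\gamma})=p.$$
   Context: $\mathcal U_\infty$ is the set of finite subsets of $\mathbb N$; weights are families $(\gamma_u)_{u\in\mathcal U_\infty}$ of non-negative reals. Product weights: $\gamma_u=\prod_{j\in u}\gamma_j$ ($\gamma_\emptyset=1$) for a non-increasing sequence $(\gamma_j)_{j\in\mathbb N}$ of non-negative reals. For a family $(a_v)_{v\in V}$ of non-negative reals over a countably infinite index set, $\mathrm{decay}((a_v))=\sup\{\tau>0:\sum_va_v^{1/\tau}<\infty\}$, $\sup\emptyset=0$. For $C>0$: $(T^\uparrow_{\infty,C}{\boldsymbol\gamma})_u=\sum_{v\in\mathcal U_\infty,\,v\supseteq u}C^{2|v|}\gamma_v$ (well defined since $\sum_vC^{2|v|}\gamma_v<\infty$ here). *)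

theory Defs
  imports "HOL-Analysis.Analysis" "HOL-Library.Extended_Real"
begin

definition U_inf :: "nat set set" where
  "U_inf = {u. finite u}"

text \<open>decay of a non-negative family a over an index set V:
  sup of tau > 0 with sum of a_v^(1/tau) finite; sup of the empty set is 0.
  Values in ereal since the supremum may be infinite.\<close>
definition decay :: "'a set \<Rightarrow> ('a \<Rightarrow> real) \<Rightarrow> ereal" where
  "decay V a = Sup (insert 0 (ereal ` {\<tau>::real. \<tau> > 0 \<and> (\<lambda>v. a v powr (1 / \<tau>)) summable_on V}))"

definition prod_weights :: "(nat \<Rightarrow> real) \<Rightarrow> nat set \<Rightarrow> real" where
  "prod_weights g u = (\<Prod>j\<in>u. g j)"

definition T_up_inf :: "real \<Rightarrow> (nat set \<Rightarrow> real) \<Rightarrow> nat set \<Rightarrow> real" where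
  "T_up_inf C w u = (\<Sum>\<^sub>\<infinity>v\<in>{v\<in>U_inf. u \<subseteq> v}. C ^ (2 * card v) * w v)"

end

theory Submission
  imports Defs
begin

lemma key_fwd:
  fixes a :: "nat \<Rightarrow> real"
  assumes nn: "\<And>j. a j \<ge> 0" and s: "(\<lambda>u. \<Prod>j\<in>u. a j) summable_on U_inf"
  shows "summable a"
proof -
  have sub: "(\<lambda>j. {j}) ` UNIV \<subseteq> U_inf" by (auto simp: U_inf_def)
  have "(\<lambda>u. \<Prod>j\<in>u. a j) summable_on ((\<lambda>j. {j}) ` UNIV)"
    using summable_on_subset_banach[OF s sub] .
  then have "((\<lambda>u. \<Prod>j\<in>u. a j) \<circ> (\<lambda>j. {j})) summable_on UNIV"
    by (subst (asm) summable_on_reindex) (auto simp: inj_on_def)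
  then have "a summable_on UNIV" by (simp add: o_def)
  then show ?thesis using summable_on_UNIV_nonneg_real_iff nn by blast
qed

lemma key_bwd:
  fixes a :: "nat \<Rightarrow> real"
  assumes nn: "\<And>j. a j \<ge> 0" and s: "summable a"
  shows "(\<lambda>u. \<Prod>j\<in>u. a j) summable_on U_inf"
proof (rule nonneg_bdd_above_summable_on)
  show "\<And>x. x \<in> U_inf \<Longrightarrow> 0 \<le> (\<Prod>j\<in>x. a j)" using nn by (simp add: prod_nonneg)
  show "bdd_above (sum (\<lambda>u. \<Prod>j\<in>u. a j) ` {F. F \<subseteq> U_inf \<and> finite F})"
  proof (rule bdd_aboveI2)
    fix F assume F: "F \<in> {F. F \<subseteq> U_inf \<and> finite F}"
    then have fin: "finite (\<Union>F)" by (auto simp: U_inf_def)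
    then obtain N where N: "\<Union>F \<subseteq> {..<N}"
      by (meson finite_nat_bounded)
    have FP: "F \<subseteq> Pow {..<N}" using N by auto
    have "sum (\<lambda>u. \<Prod>j\<in>u. a j) F \<le> sum (\<lambda>u. \<Prod>j\<in>u. a j) (Pow {..<N})"
      by (rule sum_mono2) (use FP nn in \<open>auto simp: prod_nonneg\<close>)
    also have "\<dots> = (\<Prod>j<N. a j + 1)"
      by (subst prod_add) auto
    also have "\<dots> \<le> (\<Prod>j<N. exp (a j))"
      by (rule prod_mono) (use nn in \<open>auto simp: add.commute\<close>)
    also have "\<dots> = exp (\<Sum>j<N. a j)" by (simp add: exp_sum)
    also have "\<dots> \<le> exp (suminf a)"
      using sum_le_suminf[OF s, of "{..<N}"] nn by auto
    finally show "sum (\<lambda>u. \<Prod>j\<in>u. a j) F \<le> exp (suminf a)" .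
  qed
qed

lemma key:
  fixes a :: "nat \<Rightarrow> real"
  assumes nn: "\<And>j. a j \<ge> 0"
  shows "(\<lambda>u. \<Prod>j\<in>u. a j) summable_on U_inf \<longleftrightarrow> summable a"
  using key_fwd key_bwd nn by blast

lemma gamma_summ:
  fixes g :: "nat \<Rightarrow> real" and s :: real
  assumes nn: "\<And>j. g j \<ge> 0"
  shows "(\<lambda>u. prod_weights g u powr s) summable_on U_inf \<longleftrightarrow> (\<lambda>j. g j powr s) summable_on UNIV"
proof -
  have "(\<lambda>u. prod_weights g u powr s) summable_on U_inf \<longleftrightarrow>
        (\<lambda>u. \<Prod>j\<in>u. g j powr s) summable_on U_inf"
    by (rule summable_on_cong) (simp add: prod_weights_def prod_powr_distrib nn)
  also have "\<dots> \<longleftrightarrow> summable (\<lambda>j. g j powr s)" by (rule key) simp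
  also have "\<dots> \<longleftrightarrow> (\<lambda>j. g j powr s) summable_on UNIV"
    by (rule summable_on_UNIV_nonneg_real_iff[symmetric]) simp
  finally show ?thesis .
qed

lemma T_summ:
  fixes g :: "nat \<Rightarrow> real" and s C :: real
  assumes nn: "\<And>j. g j \<ge> 0" and sg: "summable g" and C: "C > 0" and s: "s > 0"
  shows "(\<lambda>u. T_up_inf C (prod_weights g) u powr s) summable_on U_inf \<longleftrightarrow> (\<lambda>j. g j powr s) summable_on UNIV"
proof -
  define h where "h j = C^2 * g j" for j
  have hnn: "h j \<ge> 0" for j using nn by (simp add: h_def)
  have Teq: "T_up_inf C (prod_weights g) u = infsum (\<lambda>v. \<Prod>j\<in>v. h j) {v\<in>U_inf. u \<subseteq> v}" for u
    unfolding T_up_inf_def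
    by (rule infsum_cong) (simp add: h_def prod_weights_def prod.distrib power_mult)
  have Hs: "(\<lambda>v. \<Prod>j\<in>v. h j) summable_on U_inf"
    by (rule key_bwd) (use hnn sg in \<open>auto simp: h_def\<close>)
  define S where "S = infsum (\<lambda>v. \<Prod>j\<in>v. h j) U_inf"
  have Hsu: "(\<lambda>v. \<Prod>j\<in>v. h j) summable_on {v\<in>U_inf. u \<subseteq> v}" for u
    by (rule summable_on_subset_banach[OF Hs]) auto
  have low: "(\<Prod>j\<in>u. h j) \<le> T_up_inf C (prod_weights g) u" if u: "u \<in> U_inf" for u
  proof -
    have "sum (\<lambda>v. \<Prod>j\<in>v. h j) {u} \<le> infsum (\<lambda>v. \<Prod>j\<in>v. h j) {v\<in>U_inf. u \<subseteq> v}"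
      by (rule finite_sum_le_infsum[OF Hsu]) (use u hnn in \<open>auto simp: prod_nonneg\<close>)
    then show ?thesis by (simp add: Teq)
  qed
  have up: "T_up_inf C (prod_weights g) u \<le> (\<Prod>j\<in>u. h j) * S" if u: "u \<in> U_inf" for u
    unfolding Teq
  proof (rule infsum_le_finite_sums[OF Hsu])
    fix F assume F: "finite F" "F \<subseteq> {v \<in> U_inf. u \<subseteq> v}"
    have "sum (\<lambda>v. \<Prod>j\<in>v. h j) F = sum (\<lambda>v. (\<Prod>j\<in>u. h j) * (\<Prod>j\<in>v-u. h j)) F"
    proof (rule sum.cong)
      fix v assume "v \<in> F"
      then have "finite v" "u \<subseteq> v" using F by (auto simp: U_inf_def)
      then show "(\<Prod>j\<in>v. h j) = (\<Prod>j\<in>u. h j) * (\<Prod>j\<in>v-u. h j)"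
        by (simp add: prod.subset_diff mult.commute)
    qed simp
    also have "\<dots> = (\<Prod>j\<in>u. h j) * sum (\<lambda>v. \<Prod>j\<in>v-u. h j) F"
      by (simp add: sum_distrib_left)
    also have "sum (\<lambda>v. \<Prod>j\<in>v-u. h j) F = sum (\<lambda>w. \<Prod>j\<in>w. h j) ((\<lambda>v. v - u) ` F)"
    proof -
      have "inj_on (\<lambda>v. v - u) F"
        using F by (auto simp: inj_on_def)
      then show ?thesis by (simp add: sum.reindex)
    qed
    also have "\<dots> \<le> S" unfolding S_def
      by (rule finite_sum_le_infsum[OF Hs]) (use F hnn in \<open>auto simp: U_inf_def prod_nonneg\<close>)
    finally show "sum (\<lambda>v. \<Prod>j\<in>v. h j) F \<le> (\<Prod>j\<in>u. h j) * S"
      by (simp add: mult_left_mono prod_nonneg hnn)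
  qed
  have Snn: "S \<ge> 0" unfolding S_def by (rule infsum_nonneg) (simp add: prod_nonneg hnn)
  have hpow: "h j powr s = (C^2) powr s * g j powr s" for j
    by (simp add: h_def powr_mult nn)
  have cpos: "(C^2) powr s > 0" using C by simp
  show ?thesis
  proof
    assume A: "(\<lambda>u. T_up_inf C (prod_weights g) u powr s) summable_on U_inf"
    have "(\<lambda>u. \<Prod>j\<in>u. h j powr s) summable_on U_inf"
    proof (rule summable_on_comparison_test[OF A])
      fix u assume u: "u \<in> U_inf"
      have "(\<Prod>j\<in>u. h j powr s) = (\<Prod>j\<in>u. h j) powr s"
        by (simp add: prod_powr_distrib hnn)
      also have "\<dots> \<le> T_up_inf C (prod_weights g) u powr s"
        by (rule powr_mono2) (use s low[OF u] hnn in \<open>auto simp: prod_nonneg\<close>)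
      finally show "(\<Prod>j\<in>u. h j powr s) \<le> T_up_inf C (prod_weights g) u powr s" .
      show "0 \<le> (\<Prod>j\<in>u. h j powr s)" by (simp add: prod_nonneg)
    qed
    then have "summable (\<lambda>j. h j powr s)" by (rule key_fwd[rotated]) simp
    then have "summable (\<lambda>j. g j powr s)" using cpos by (simp add: hpow)
    then show "(\<lambda>j. g j powr s) summable_on UNIV"
      by (subst summable_on_UNIV_nonneg_real_iff) auto
  next
    assume A: "(\<lambda>j. g j powr s) summable_on UNIV"
    then have "summable (\<lambda>j. g j powr s)"
      by (subst (asm) summable_on_UNIV_nonneg_real_iff) auto
    then have "summable (\<lambda>j. h j powr s)" by (simp add: hpow)
    then have "(\<lambda>u. \<Prod>j\<in>u. h j powr s) summable_on U_inf" by (rule key_bwd[rotated]) simp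
    then have B: "(\<lambda>u. S powr s * (\<Prod>j\<in>u. h j powr s)) summable_on U_inf"
      by (rule summable_on_cmult_right)
    show "(\<lambda>u. T_up_inf C (prod_weights g) u powr s) summable_on U_inf"
    proof (rule summable_on_comparison_test[OF B])
      fix u assume u: "u \<in> U_inf"
      have T0: "0 \<le> T_up_inf C (prod_weights g) u"
        using low[OF u] by (meson order_trans prod_nonneg hnn)
      have "T_up_inf C (prod_weights g) u powr s \<le> ((\<Prod>j\<in>u. h j) * S) powr s"
        by (rule powr_mono2) (use s up[OF u] T0 in auto)
      also have "\<dots> = S powr s * (\<Prod>j\<in>u. h j powr s)"
        by (simp add: powr_mult prod_nonneg hnn Snn prod_powr_distrib)
      finally show "T_up_inf C (prod_weights g) u powr s \<le> S powr s * (\<Prod>j\<in>u. h j powr s)" .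
      show "0 \<le> T_up_inf C (prod_weights g) u powr s" by simp
    qed
  qed
qed

theorem mainTheorem11:
  fixes C :: real and g :: "nat \<Rightarrow> real" and p :: ereal
  assumes "C > 0"
    and "\<And>j. g j \<ge> 0"
    and "decseq g"
    and "summable g"
    and "p = decay (UNIV :: nat set) g"
  shows "decay U_inf (T_up_inf C (prod_weights g)) = decay U_inf (prod_weights g)
         \<and> decay U_inf (prod_weights g) = p"
proof -
  have 1: "decay U_inf (prod_weights g) = decay UNIV g"
    unfolding decay_def using gamma_summ[OF assms(2)] by simp
  have 2: "decay U_inf (T_up_inf C (prod_weights g)) = decay UNIV g"
  proof -
    have "{\<tau>::real. \<tau> > 0 \<and> (\<lambda>v. T_up_inf C (prod_weights g) v powr (1 / \<tau>)) summable_on U_inf}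
        = {\<tau>::real. \<tau> > 0 \<and> (\<lambda>v. g v powr (1 / \<tau>)) summable_on UNIV}"
      using T_summ[OF assms(2) assms(4) assms(1)] by auto
    then show ?thesis unfolding decay_def by simp
  qed
  show ?thesis using 1 2 assms(5) by simp
qed

end
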